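(* Consider the draining problem described in the context. For any optimal trajectory $(s^\ast,R^\ast)$ with optimal control $u^\ast$ and optimal cost $T^\ast$, there exists a unique time $t^0$ such that $\|s^\ast(t^0)-x\|=\delta$ and $R^\ast(t^0)=0$, where $\delta=\sqrt{r^2(B-A)/B}$. Moreover, $$u^\ast(t)=\frac{s^\psi-s^\ast(t^0)}{\|s^\psi-s^\ast(t^0)\|}\quad\text{for every }t\in[t^0,T^\ast].$$
   Context: $\|\cdot\|$ is the Euclidean norm. A single target sits at the fixed position $x\in\mathbb{R}^2$, with sensing range $r>0$ and constants $A,B$ with $B>A$ (uncertainty accumulation rate $A$). The agent has position $s(t)\in\mathbb{R}^2$ with dynamics $\dot s(t)=u(t)$ and control constraint $\|u(t)\|\le 1$. Define $p(s)=\max\{0,\,1-\|s-x\|^2/r^2\}$ and $f_R(R,s)=0$ if $R=0$ and $A-Bp(s)<0$, and $f_R(R,s)=A-Bp(s)$ otherwise. The entrance point $s^\varphi$ and departure point $s^\psi$ are the points where the agent starts, respectively stops, sensing the target, and $\check R$ is the uncertainty at arrival. The draining problem is: minimize $T$ over $T$ and controls $u:[0,T]\to\mathbb{R}^2$ subject to $\dot s=u$, $\dot R=f_R(R,s)$, $\|u(t)\|^2\le1$, $\min_{\tau\in[0,T]}R(\tau)=0$, $s(0)=s^\varphi$, $s(T)=s^\psi$, $R(0)=\check R$. *)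

theory Defs
  imports "HOL-Analysis.Analysis"
begin

definition sense_prob :: "real \<Rightarrow> real^2 \<Rightarrow> real^2 \<Rightarrow> real" where
  "sense_prob r x s = max 0 (1 - (norm (s - x))^2 / r^2)"

definition f_R :: "real \<Rightarrow> real \<Rightarrow> real \<Rightarrow> real^2 \<Rightarrow> real \<Rightarrow> real^2 \<Rightarrow> real" where
  "f_R A B r x R s =
     (if R = 0 \<and> A - B * sense_prob r x s < 0 then 0 else A - B * sense_prob r x s)"

text \<open>Feasible (T,u,s,R) for the draining problem. The ODEs are understood in the
  integral (Caratheodory) sense, controls being integrable functions on [0,T].\<close>
definition draining_feasible ::
  "real \<Rightarrow> real \<Rightarrow> real \<Rightarrow> real^2 \<Rightarrow> real^2 \<Rightarrow> real^2 \<Rightarrow> real \<Rightarrow>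
   real \<Rightarrow> (real \<Rightarrow> real^2) \<Rightarrow> (real \<Rightarrow> real^2) \<Rightarrow> (real \<Rightarrow> real) \<Rightarrow> bool" where
  "draining_feasible A B r x sphi spsi Rc T u s R \<longleftrightarrow>
     0 \<le> T
   \<and> u integrable_on {0..T}
   \<and> (\<forall>t\<in>{0..T}. (norm (u t))^2 \<le> 1)
   \<and> (\<forall>t\<in>{0..T}. s t = sphi + integral {0..t} u)
   \<and> (\<lambda>t. f_R A B r x (R t) (s t)) integrable_on {0..T}
   \<and> (\<forall>t\<in>{0..T}. R t = Rc + integral {0..t} (\<lambda>\<tau>. f_R A B r x (R \<tau>) (s \<tau>)))
   \<and> (INF \<tau>\<in>{0..T}. R \<tau>) = 0
   \<and> s 0 = sphi \<and> s T = spsi \<and> R 0 = Rc"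

definition draining_optimal ::
  "real \<Rightarrow> real \<Rightarrow> real \<Rightarrow> real^2 \<Rightarrow> real^2 \<Rightarrow> real^2 \<Rightarrow> real \<Rightarrow>
   real \<Rightarrow> (real \<Rightarrow> real^2) \<Rightarrow> (real \<Rightarrow> real^2) \<Rightarrow> (real \<Rightarrow> real) \<Rightarrow> bool" where
  "draining_optimal A B r x sphi spsi Rc T u s R \<longleftrightarrow>
     draining_feasible A B r x sphi spsi Rc T u s R
   \<and> (\<forall>T' u' s' R'. draining_feasible A B r x sphi spsi Rc T' u' s' R' \<longrightarrow> T \<le> T')"

end

theory Submission
  imports Defs
begin

definition gfun :: "real \<Rightarrow> real \<Rightarrow> real \<Rightarrow> real^2 \<Rightarrow> real^2 \<Rightarrow> real" where
  "gfun A B r x y = A - B * sense_prob r x y"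

lemma f_R_g: "f_R A B r x R y = (if R = 0 \<and> gfun A B r x y < 0 then 0 else gfun A B r x y)"
  by (simp add: f_R_def gfun_def)


lemma first_zero:
  fixes F :: "real \<Rightarrow> real"
  assumes cF: "continuous_on {a..b} F" and Fa: "0 < F a" and t0: "t0 \<in> {a..b}" "F t0 \<le> 0"
  shows "\<exists>g. a < g \<and> g \<le> b \<and> F g = 0 \<and> (\<forall>t. a \<le> t \<and> t < g \<longrightarrow> 0 < F t)"
proof -
  define Z where "Z = {t \<in> {a..b}. F t = 0}"
  have ivt: "\<exists>z\<in>Z. z \<le> t" if "t \<in> {a..b}" "F t \<le> 0" for t
  proof -
    have "\<exists>z\<ge>a. z \<le> t \<and> F z = 0"
      using IVT2'[of F t 0 a] that Fa continuous_on_subset[OF cF, of "{a..t}"] by auto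
    then show ?thesis using that unfolding Z_def by auto
  qed
  have Zne: "Z \<noteq> {}" using ivt[OF t0] by auto
  have Zc: "closed Z" unfolding Z_def using continuous_closed_preimage_constant[OF cF] by simp
  have Zb: "bdd_below Z" unfolding Z_def by (rule bdd_belowI[of _ a]) auto
  define g where "g = Inf Z"
  have gZ: "g \<in> Z" unfolding g_def using closed_contains_Inf[OF Zne Zb Zc] .
  have pos: "0 < F t" if tt: "a \<le> t" "t < g" for t
  proof (rule ccontr)
    assume "\<not> 0 < F t"
    moreover have "t \<le> b" using gZ tt unfolding Z_def by auto
    ultimately obtain z where "z \<in> Z" "z \<le> t" using ivt[of t] tt by force
    then have "g \<le> z" unfolding g_def using Zb by (simp add: cInf_lower)
    then show False using \<open>z \<le> t\<close> tt by simp
  qed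
  have "a \<noteq> g" using gZ Fa unfolding Z_def by auto
  then have "a < g" "g \<le> b" "F g = 0" using gZ unfolding Z_def by auto
  then show ?thesis using pos by blast
qed

lemma line_conv:
  fixes Q e x :: "real^2"
  assumes "g \<le> \<sigma>" "\<sigma> \<le> \<tau>" "norm (Q + (g - a) *\<^sub>R e - x) \<le> d" "norm (Q + (\<tau> - a) *\<^sub>R e - x) \<le> d"
  shows "norm (Q + (\<sigma> - a) *\<^sub>R e - x) \<le> d"
proof (cases "\<tau> = g")
  case True
  then show ?thesis using assms by (metis order_antisym)
next
  case False
  then have tg: "g < \<tau>" using assms by simp
  define \<mu> where "\<mu> = (\<sigma> - g) / (\<tau> - g)"
  have m: "0 \<le> \<mu>" "\<mu> \<le> 1" using assms tg unfolding \<mu>_def by (auto simp: field_simps)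
  have c1: "\<mu> * (\<tau> - g) = \<sigma> - g" unfolding \<mu>_def using tg by simp
  have "(1 - \<mu>) * (g - a) + \<mu> * (\<tau> - a) = (g - a) + \<mu> * (\<tau> - g)" by (simp add: algebra_simps)
  with c1 have c: "(1 - \<mu>) * (g - a) + \<mu> * (\<tau> - a) = \<sigma> - a" by simp
  have "Q + (\<sigma> - a) *\<^sub>R e - x = (1 - \<mu>) *\<^sub>R (Q + (g - a) *\<^sub>R e - x) + \<mu> *\<^sub>R (Q + (\<tau> - a) *\<^sub>R e - x)"
  proof -
    have "(1 - \<mu>) *\<^sub>R (Q + (g - a) *\<^sub>R e - x) + \<mu> *\<^sub>R (Q + (\<tau> - a) *\<^sub>R e - x)
       = Q - x + ((1 - \<mu>) * (g - a) + \<mu> * (\<tau> - a)) *\<^sub>R e"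
      by (simp add: algebra_simps)
    then show ?thesis using c by simp
  qed
  then have "norm (Q + (\<sigma> - a) *\<^sub>R e - x) \<le> (1 - \<mu>) * norm (Q + (g - a) *\<^sub>R e - x) + \<mu> * norm (Q + (\<tau> - a) *\<^sub>R e - x)"
    using norm_triangle_ineq[of "(1 - \<mu>) *\<^sub>R (Q + (g - a) *\<^sub>R e - x)" "\<mu> *\<^sub>R (Q + (\<tau> - a) *\<^sub>R e - x)"] m
    by simp
  also have "\<dots> \<le> (1 - \<mu>) * d + \<mu> * d"
    using m assms by (intro add_mono mult_left_mono) auto
  finally show ?thesis by (simp add: algebra_simps)
qed

lemma nonneg_int0_AE:
  fixes k :: "real \<Rightarrow> real"
  assumes ki: "(k has_integral 0) {a..b}" and kn: "\<forall>t\<in>{a..b}. 0 \<le> k t"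
  shows "AE t in lebesgue. t \<in> {a..b} \<longrightarrow> k t = 0"
proof -
  define k' where "k' = (\<lambda>t. if t \<in> {a..b} then k t else 0)"
  have nn: "\<And>t. 0 \<le> k' t" using kn unfolding k'_def by auto
  have "(k' has_integral 0) UNIV" unfolding k'_def using ki has_integral_restrict_UNIV by blast
  then have "k' \<in> borel_measurable lebesgue \<and> integral\<^sup>N lebesgue k' = ennreal 0 \<and> 0 \<le> (0::real)"
    using has_integral_iff_nn_integral_lebesgue[of k' 0] nn by blast
  then have m: "k' \<in> borel_measurable lebesgue" and z: "integral\<^sup>N lebesgue k' = 0" by auto
  have m': "(\<lambda>t. ennreal (k' t)) \<in> borel_measurable lebesgue" using m by auto
  have "AE t in lebesgue. ennreal (k' t) = 0" using nn_integral_0_iff_AE[OF m'] z by simp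
  then show ?thesis
  proof (rule AE_mp, intro AE_I2 impI)
    fix t assume "ennreal (k' t) = 0" "t \<in> {a..b}"
    then show "k t = 0" using nn[of t] unfolding k'_def by simp
  qed
qed

lemma straight_AE:
  fixes u :: "real \<Rightarrow> real^2" and e :: "real^2"
  assumes ab: "a \<le> b" and ui: "u integrable_on {a..b}" and un: "\<forall>t\<in>{a..b}. norm (u t) \<le> 1"
    and ne: "norm e = 1" and iu: "integral {a..b} u = (b - a) *\<^sub>R e"
  shows "AE t in lebesgue. t \<in> {a..b} \<longrightarrow> u t = e"
proof -
  define k where "k = (\<lambda>t. 1 - inner e (u t))"
  have ie: "((\<lambda>t. inner e (u t)) has_integral inner e ((b - a) *\<^sub>R e)) {a..b}"
    using has_integral_linear[OF integrable_integral[OF ui] bounded_linear_inner_right[of e]] iu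
    by (simp add: o_def)
  have eq: "inner e ((b - a) *\<^sub>R e) = b - a" using ne by (simp add: inner_commute dot_square_norm)
  have ie': "((\<lambda>t. inner e (u t)) has_integral (b - a)) {a..b}" using ie[unfolded eq] .
  have "((\<lambda>t. 1::real) has_integral (b - a)) {a..b}" using has_integral_const_real[of "1::real" a b] ab by simp
  then have "(k has_integral 0) {a..b}" unfolding k_def using has_integral_diff[OF _ ie'] by fastforce
  moreover have "\<forall>t\<in>{a..b}. 0 \<le> k t"
  proof
    fix t assume "t \<in> {a..b}"
    then have "inner e (u t) \<le> norm e * norm (u t)" "norm (u t) \<le> 1" using norm_cauchy_schwarz un by auto
    then show "0 \<le> k t" unfolding k_def using ne by simp
  qed
  ultimately have "AE t in lebesgue. t \<in> {a..b} \<longrightarrow> k t = 0" by (rule nonneg_int0_AE)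
  then show ?thesis
  proof (rule AE_mp, intro AE_I2 impI)
    fix t assume h: "t \<in> {a..b} \<longrightarrow> k t = 0" "t \<in> {a..b}"
    then have i1: "inner e (u t) = 1" unfolding k_def by simp
    have "(norm (u t - e))^2 = (norm (u t))^2 - 2 * inner e (u t) + (norm e)^2"
      by (simp add: power2_norm_eq_inner inner_diff_left inner_diff_right inner_commute)
    moreover have "(norm (u t))^2 \<le> 1" using un h(2) by (simp add: abs_square_le_1)
    ultimately have "(norm (u t - e))^2 \<le> 0" using i1 ne by simp
    then show "u t = e" by simp
  qed
qed

lemma normsq_line:
  fixes v e :: "real^2"
  assumes "norm e = 1"
  shows "(norm (v + t *\<^sub>R e))^2 = (norm v)^2 + 2 * t * inner v e + t^2"
proof -
  have "(norm (v + t *\<^sub>R e))^2 = inner (v + t *\<^sub>R e) (v + t *\<^sub>R e)" by (rule power2_norm_eq_inner)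
  also have "\<dots> = inner v v + 2 * t * inner v e + t^2 * inner e e"
    by (simp add: inner_add_left inner_add_right inner_commute power2_eq_square algebra_simps)
  also have "inner v v = (norm v)^2" by (simp add: power2_norm_eq_inner)
  also have "inner e e = 1" using assms by (simp add: power2_norm_eq_inner[symmetric])
  finally show ?thesis by simp
qed

context
  fixes A B r :: real and x :: "real^2"
  assumes r: "0 < r" and AB: "0 < A" "A < B"
begin

definition "dlt = sqrt (r^2 * (B - A) / B)"

lemma dlt_pos: "0 < dlt" and dlt_lt: "dlt < r" and dlt_sq: "dlt^2 = r^2 * (B - A) / B"
proof -
  have q: "0 < r^2 * (B - A) / B" using r AB by simp
  show "0 < dlt" unfolding dlt_def using q by simp
  show ds: "dlt^2 = r^2 * (B - A) / B" unfolding dlt_def using q by simp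
  have lt: "r^2 * (B - A) / B < r^2" using r AB by (simp add: field_simps)
  then have "sqrt (r^2 * (B - A) / B) < sqrt (r^2)" by (simp only: real_sqrt_less_iff)
  then show "dlt < r" using r dlt_def by simp
qed

lemma g_upper: "gfun A B r x y \<le> B / r^2 * ((norm (y - x))^2 - dlt^2)"
proof -
  have "gfun A B r x y \<le> A - B * (1 - (norm (y - x))^2 / r^2)"
    unfolding gfun_def sense_prob_def using AB by (simp add: mult_left_mono)
  also have "\<dots> = B / r^2 * ((norm (y - x))^2 - dlt^2)"
    using r AB by (simp add: dlt_sq field_simps)
  finally show ?thesis .
qed

lemma g_nonneg: assumes "dlt \<le> norm (y - x)" shows "0 \<le> gfun A B r x y"
proof (cases "norm (y - x) \<le> r")
  case True
  have "dlt^2 \<le> (norm (y - x))^2" using assms dlt_pos by (simp add: power_mono)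
  then have e: "1 - (norm (y - x))^2 / r^2 \<le> 1 - dlt^2 / r^2" using r by (simp add: divide_right_mono)
  have "B * (1 - dlt^2/r^2) = A" using r AB by (simp add: dlt_sq field_simps)
  have "max 0 (1 - (norm (y - x))^2 / r^2) \<le> 1 - dlt^2/r^2"
    using e dlt_lt dlt_pos r by (simp add: power_mono less_imp_le divide_le_eq_1)
  then have "B * max 0 (1 - (norm (y - x))^2 / r^2) \<le> B * (1 - dlt^2/r^2)"
    using AB by (simp add: mult_left_mono)
  then show ?thesis unfolding gfun_def sense_prob_def using \<open>B * (1 - dlt^2/r^2) = A\<close> by simp
next
  case False
  then have "(norm (y - x))^2 / r^2 \<ge> 1" using r
    by (simp add: power_mono field_simps less_imp_le)
  then show ?thesis unfolding gfun_def sense_prob_def using AB by simp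
qed

lemma g_nonpos: assumes "norm (y - x) \<le> dlt" shows "gfun A B r x y \<le> 0"
proof -
  have "(norm (y - x))^2 \<le> dlt^2" using assms by (simp add: power_mono)
  then have "B * ((norm (y - x))^2 - dlt^2) \<le> 0" using AB by (simp add: mult_nonneg_nonpos)
  then have "B / r^2 * ((norm (y - x))^2 - dlt^2) \<le> 0" using r by (simp add: divide_nonpos_pos)
  then show ?thesis using g_upper[of y] by linarith
qed

lemma f_R_nonneg: "dlt \<le> norm (y - x) \<Longrightarrow> 0 \<le> f_R A B r x R y"
  using g_nonneg[of y] by (simp add: f_R_g)
lemma f_R_nonpos: "norm (y - x) \<le> dlt \<Longrightarrow> f_R A B r x R y \<le> 0"
  using g_nonpos by (simp add: f_R_g)
lemma f_R_eq_g: "dlt \<le> norm (y - x) \<Longrightarrow> f_R A B r x R y = gfun A B r x y"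
  using g_nonneg[of y] by (simp add: f_R_g)


lemma zero_inside:
  fixes y :: "real \<Rightarrow> real^2" and F f :: "real \<Rightarrow> real"
  assumes ag: "a < g" and cy: "continuous_on {a..g} y" and Fg: "F g = 0"
    and pos: "\<forall>t. a \<le> t \<and> t < g \<longrightarrow> 0 < F t"
    and Fint: "\<forall>t\<in>{a..g}. F g = F t + integral {t..g} f"
    and fint: "f integrable_on {a..g}"
    and fnn: "\<forall>t\<in>{a..g}. dlt \<le> norm (y t - x) \<longrightarrow> 0 \<le> f t"
  shows "norm (y g - x) \<le> dlt"
proof (rule ccontr)
  assume "\<not> norm (y g - x) \<le> dlt"
  then have d: "0 < norm (y g - x) - dlt" by simp
  have gin: "g \<in> {a..g}" using ag by simp
  obtain h where h: "h > 0" "\<forall>t\<in>{a..g}. dist t g < h \<longrightarrow> dist (y t) (y g) < norm (y g - x) - dlt"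
    using cy[unfolded continuous_on_iff] gin d by metis
  define t where "t = max a (g - h/2)"
  have t: "a \<le> t" "t < g" using ag h unfolding t_def by auto
  have "0 \<le> f s" if "s \<in> {t..g}" for s
  proof -
    have "s \<in> {a..g}" "dist s g < h" using that t h unfolding t_def dist_real_def by auto
    then have "dist (y s) (y g) < norm (y g - x) - dlt" using h by blast
    moreover have "norm (y g - x) \<le> norm (y g - y s) + norm (y s - x)"
      using norm_triangle_ineq[of "y g - y s" "y s - x"] by simp
    moreover have "dist (y s) (y g) = norm (y g - y s)" by (simp add: dist_norm norm_minus_commute)
    ultimately have "dlt \<le> norm (y s - x)" by linarith
    then show ?thesis using fnn \<open>s \<in> {a..g}\<close> by blast
  qed
  moreover have "f integrable_on {t..g}" using integrable_subinterval_real[OF fint] t by auto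
  ultimately have "0 \<le> integral {t..g} f" by (metis integral_nonneg)
  moreover have "0 < F t" using pos t by blast
  ultimately show False using Fint t Fg by force
qed


lemma g_cont: "continuous_on S (\<lambda>t. gfun A B r x (y t))" if "continuous_on S y"
  unfolding gfun_def sense_prob_def using r by (intro continuous_intros that) auto

context
  fixes sphi spsi :: "real^2" and Rc T :: real and u s :: "real \<Rightarrow> real^2" and R :: "real \<Rightarrow> real"
  assumes feas: "draining_feasible A B r x sphi spsi Rc T u s R"
begin

abbreviation "fR \<equiv> (\<lambda>t. f_R A B r x (R t) (s t))"

lemma T0: "0 \<le> T" and uint: "u integrable_on {0..T}"
  and unorm2: "\<forall>t\<in>{0..T}. (norm (u t))^2 \<le> 1"
  and s_eq: "\<forall>t\<in>{0..T}. s t = sphi + integral {0..t} u"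
  and fint: "fR integrable_on {0..T}"
  and R_eq: "\<forall>t\<in>{0..T}. R t = Rc + integral {0..t} fR"
  and INF0: "(INF \<tau>\<in>{0..T}. R \<tau>) = 0"
  and s0: "s 0 = sphi" and sT: "s T = spsi" and R0: "R 0 = Rc"
  using feas unfolding draining_feasible_def by blast+

lemma unorm: "t \<in> {0..T} \<Longrightarrow> norm (u t) \<le> 1"
proof -
  assume "t \<in> {0..T}"
  then have "(norm (u t))^2 \<le> 1^2" using unorm2 by simp
  then show ?thesis by (rule power2_le_imp_le) simp
qed

lemma s_diff: assumes "0 \<le> a" "a \<le> b" "b \<le> T" shows "s b - s a = integral {a..b} u"
proof -
  have "integral {0..a} u + integral {a..b} u = integral {0..b} u"
    using Henstock_Kurzweil_Integration.integral_combine[where a=0 and c=a and b=b and f=u] integrable_subinterval_real[OF uint, of 0 b] assms by simp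
  then show ?thesis using s_eq assms by (simp add: algebra_simps)
qed

lemma R_diff: assumes "0 \<le> a" "a \<le> b" "b \<le> T" shows "R b - R a = integral {a..b} fR"
proof -
  have "integral {0..a} fR + integral {a..b} fR = integral {0..b} fR"
    using Henstock_Kurzweil_Integration.integral_combine[where a=0 and c=a and b=b and f=fR] integrable_subinterval_real[OF fint, of 0 b] assms by simp
  then show ?thesis using R_eq assms by (simp add: algebra_simps)
qed

lemma s_lip: assumes "0 \<le> a" "a \<le> b" "b \<le> T" shows "norm (s b - s a) \<le> b - a"
proof -
  have ui: "u integrable_on {a..b}" using integrable_subinterval_real[OF uint] assms by simp
  have "norm (integral {a..b} u) \<le> integral {a..b} (\<lambda>_. 1::real)"
    by (rule integral_norm_bound_integral[OF ui]) (use unorm assms in auto)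
  then show ?thesis using s_diff[OF assms] assms by simp
qed

lemma s_cont: "continuous_on {0..T} s"
proof -
  have "continuous_on {0..T} (\<lambda>t. sphi + integral {0..t} u)"
    by (intro continuous_intros indefinite_integral_continuous_1 uint)
  then show ?thesis by (rule continuous_on_eq) (use s_eq in auto)
qed

lemma R_cont: "continuous_on {0..T} R"
proof -
  have "continuous_on {0..T} (\<lambda>t. Rc + integral {0..t} fR)"
    by (intro continuous_intros indefinite_integral_continuous_1 fint)
  then show ?thesis by (rule continuous_on_eq) (use R_eq in auto)
qed

lemma R_nonneg: assumes "t \<in> {0..T}" shows "0 \<le> R t"
proof -
  have "bounded (R ` {0..T})" using compact_continuous_image[OF R_cont] compact_imp_bounded by blast
  then have "bdd_below (R ` {0..T})" by (rule bounded_imp_bdd_below)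
  then show ?thesis using cINF_lower[of R "{0..T}" t] assms INF0 by simp
qed

lemma R_zero: "\<exists>t\<in>{0..T}. R t = 0"
proof -
  obtain t where t: "t \<in> {0..T}" "\<forall>y\<in>{0..T}. R t \<le> R y"
    using continuous_attains_inf[OF compact_Icc _ R_cont] T0 by auto
  then have "R t \<le> (INF \<tau>\<in>{0..T}. R \<tau>)" by (intro cINF_greatest) auto
  then show ?thesis using t R_nonneg[of t] INF0 by auto
qed

lemma competitor:
  fixes a g :: real and e' :: "real^2"
  assumes opt: "\<forall>T' u' s' R'. draining_feasible A B r x sphi spsi Rc T' u' s' R' \<longrightarrow> T \<le> T'"
    and a: "0 \<le> a" "a \<le> T" and Qn: "spsi \<noteq> s a"
    and e'_def: "e' = (1 / norm (spsi - s a)) *\<^sub>R (spsi - s a)"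
    and g: "a \<le> g" "g \<le> a + norm (spsi - s a)"
    and Fg: "R a + integral {a..g} (\<lambda>\<sigma>. gfun A B r x (s a + (\<sigma> - a) *\<^sub>R e')) = 0"
    and Fpos: "\<forall>\<tau>. a \<le> \<tau> \<and> \<tau> < g \<longrightarrow> 0 < R a + integral {a..\<tau>} (\<lambda>\<sigma>. gfun A B r x (s a + (\<sigma> - a) *\<^sub>R e'))"
    and Lg: "norm (s a + (g - a) *\<^sub>R e' - x) \<le> dlt"
  shows "T \<le> a + norm (spsi - s a)"
proof -
  define Q where "Q = s a"
  define l where "l = norm (spsi - Q)"
  define L where "L = (\<lambda>\<sigma>. Q + (\<sigma> - a) *\<^sub>R e')"
  define \<phi> where "\<phi> = (\<lambda>\<sigma>. gfun A B r x (L \<sigma>))"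
  have lpos: "0 < l" using Qn unfolding l_def Q_def by simp
  have ne: "norm e' = 1" using lpos unfolding e'_def l_def Q_def by simp
  have LT: "L (a + l) = spsi" using lpos unfolding L_def e'_def l_def Q_def by simp
  have cL: "continuous_on UNIV L" unfolding L_def by (intro continuous_intros)
  have cphi: "continuous_on UNIV \<phi>" unfolding \<phi>_def by (rule g_cont[OF cL])
  have cmphi: "continuous_on UNIV (\<lambda>\<sigma>. max 0 (\<phi> \<sigma>))" using cphi by (intro continuous_intros)
  have phii: "\<phi> integrable_on {c..d}" for c d
    by (rule integrable_continuous_real) (rule continuous_on_subset[OF cphi], simp)
  have mphii: "(\<lambda>\<sigma>. max 0 (\<phi> \<sigma>)) integrable_on {c..d}" for c d
    by (rule integrable_continuous_real) (rule continuous_on_subset[OF cmphi], simp)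
  define h where "h = (\<lambda>\<tau>. if \<tau> < g then \<phi> \<tau> else max 0 (\<phi> \<tau>))"
  define F where "F = (\<lambda>\<tau>. R a + integral {a..\<tau>} \<phi>)"
  have Fg': "F g = 0" and Fpos': "\<And>\<tau>. a \<le> \<tau> \<Longrightarrow> \<tau> < g \<Longrightarrow> 0 < F \<tau>"
    using Fg Fpos unfolding F_def \<phi>_def L_def Q_def by auto
  have Lg': "norm (L g - x) \<le> dlt" using Lg unfolding L_def Q_def .
  have H1: "(h has_integral integral {a..\<tau>} \<phi>) {a..\<tau>}" if "a \<le> \<tau>" "\<tau> \<le> g" for \<tau>
    by (rule has_integral_spike_finite[of "{g}", OF _ _ integrable_integral[OF phii]]) (use that in \<open>auto simp: h_def\<close>)
  have H2: "(h has_integral (integral {a..g} \<phi> + integral {g..\<tau>} (\<lambda>\<sigma>. max 0 (\<phi> \<sigma>)))) {a..\<tau>}"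
    if "g \<le> \<tau>" for \<tau>
  proof (rule has_integral_combine[OF g(1) that H1[OF g(1) order_refl]])
    show "(h has_integral integral {g..\<tau>} (\<lambda>\<sigma>. max 0 (\<phi> \<sigma>))) {g..\<tau>}"
      by (rule has_integral_spike_finite[of "{}", OF _ _ integrable_integral[OF mphii]]) (auto simp: h_def)
  qed
  have hint: "h integrable_on {a..c}" if "a \<le> c" for c
    using H1[of c] H2[of c] that by (cases "c \<le> g") auto
  have Rint1: "R a + integral {a..\<tau>} h = F \<tau>" if "a \<le> \<tau>" "\<tau> \<le> g" for \<tau>
    using H1[OF that] unfolding F_def by (simp add: integral_unique)
  have Rint2: "R a + integral {a..\<tau>} h = integral {g..\<tau>} (\<lambda>\<sigma>. max 0 (\<phi> \<sigma>))" if "g \<le> \<tau>" for \<tau>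
    using H2[OF that] Fg' unfolding F_def by (simp add: integral_unique)
  define T' where "T' = a + l"
  define u' where "u' = (\<lambda>\<tau>. if \<tau> \<le> a then u \<tau> else e')"
  define s' where "s' = (\<lambda>\<tau>. if \<tau> \<le> a then s \<tau> else L \<tau>)"
  define R' where "R' = (\<lambda>\<tau>. if \<tau> \<le> a then R \<tau> else R a + integral {a..\<tau>} h)"
  have K: "f_R A B r x (R' \<tau>) (s' \<tau>) = h \<tau>" if "a < \<tau>" for \<tau>
  proof (cases "\<tau> < g")
    case True
    then have "R' \<tau> = F \<tau>" using that Rint1[of \<tau>] unfolding R'_def by simp
    then have "0 < R' \<tau>" using Fpos'[of \<tau>] that True by simp
    then show ?thesis using that True unfolding s'_def h_def \<phi>_def by (simp add: f_R_g)
  next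
    case False
    then have R'eq: "R' \<tau> = integral {g..\<tau>} (\<lambda>\<sigma>. max 0 (\<phi> \<sigma>))" using that Rint2[of \<tau>] unfolding R'_def by simp
    show ?thesis
    proof (cases "0 \<le> \<phi> \<tau>")
      case True
      then show ?thesis using that False unfolding s'_def h_def \<phi>_def by (simp add: f_R_g)
    next
      case neg: False
      then have "norm (L \<tau> - x) \<le> dlt" using g_nonneg[of "L \<tau>"] unfolding \<phi>_def by force
      then have "\<phi> \<sigma> \<le> 0" if "\<sigma> \<in> {g..\<tau>}" for \<sigma>
        using line_conv[of g \<sigma> \<tau> Q a e' x dlt] that Lg' unfolding \<phi>_def L_def
        by (intro g_nonpos) auto
      then have "integral {g..\<tau>} (\<lambda>\<sigma>. max 0 (\<phi> \<sigma>)) = integral {g..\<tau>} (\<lambda>\<sigma>. 0::real)"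
        by (intro integral_cong) auto
      then have "R' \<tau> = 0" using R'eq by simp
      then show ?thesis using that False neg unfolding s'_def h_def \<phi>_def by (simp add: f_R_g)
    qed
  qed
  have FR: "f_R A B r x (R' \<tau>) (s' \<tau>) = (if \<tau> \<le> a then fR \<tau> else h \<tau>)" for \<tau>
    using K[of \<tau>] unfolding R'_def s'_def by (cases "\<tau> \<le> a") auto
  have fRi: "fR integrable_on {0..t}" if "t \<le> T" for t
    using integrable_subinterval_real[OF fint, of 0 t] that by simp
  have ui: "u integrable_on {0..t}" if "t \<le> T" for t
    using integrable_subinterval_real[OF uint, of 0 t] that by simp
  have IR: "((\<lambda>\<tau>. f_R A B r x (R' \<tau>) (s' \<tau>)) has_integral integral {0..t} fR) {0..t}" if "t \<le> a" for t
    by (rule has_integral_spike_finite[of "{}", OF _ _ integrable_integral[OF fRi]]) (use that a in \<open>auto simp: FR\<close>)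
  have IR2: "((\<lambda>\<tau>. f_R A B r x (R' \<tau>) (s' \<tau>)) has_integral (integral {0..a} fR + integral {a..t} h)) {0..t}"
    if "a \<le> t" for t
  proof (rule has_integral_combine[OF a(1) that IR[OF order_refl]])
    show "((\<lambda>\<tau>. f_R A B r x (R' \<tau>) (s' \<tau>)) has_integral integral {a..t} h) {a..t}"
      by (rule has_integral_spike_finite[of "{a}", OF _ _ integrable_integral[OF hint[OF that]]]) (auto simp: FR)
  qed
  have IU: "(u' has_integral integral {0..t} u) {0..t}" if "t \<le> a" for t
    by (rule has_integral_spike_finite[of "{}", OF _ _ integrable_integral[OF ui]]) (use that a in \<open>auto simp: u'_def\<close>)
  have IU2: "(u' has_integral (integral {0..a} u + (t - a) *\<^sub>R e')) {0..t}" if "a \<le> t" for t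
  proof (rule has_integral_combine[OF a(1) that IU[OF order_refl]])
    have "((\<lambda>_. e') has_integral (t - a) *\<^sub>R e') {a..t}"
      using has_integral_const_real[of e' a t] that by simp
    then show "(u' has_integral (t - a) *\<^sub>R e') {a..t}"
      by (rule has_integral_spike_finite[of "{a}", rotated 2]) (auto simp: u'_def)
  qed
  have R'nn: "0 \<le> R' t" if "t \<in> {0..T'}" for t
  proof (cases "t \<le> a")
    case True then show ?thesis using R_nonneg[of t] that a unfolding R'_def by simp
  next
    case False
    show ?thesis
    proof (cases "t < g")
      case True then show ?thesis using False Rint1[of t] Fpos'[of t] unfolding R'_def by simp
    next
      case c2: False
      have "0 \<le> integral {g..t} (\<lambda>\<sigma>. max 0 (\<phi> \<sigma>))" by (rule integral_nonneg[OF mphii]) simp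
      then show ?thesis using False c2 Rint2[of t] unfolding R'_def by simp
    qed
  qed
  have R'g: "R' g = 0"
  proof (cases "g \<le> a")
    case True
    then have "g = a" using g by simp
    then show ?thesis using Fg' unfolding R'_def F_def by simp
  next
    case False
    then show ?thesis using Rint1[of g] g Fg' unfolding R'_def by simp
  qed
  have gT': "g \<in> {0..T'}" using g a unfolding T'_def l_def Q_def by simp
  have bddR': "bdd_below (R' ` {0..T'})" by (rule bdd_belowI2[of _ 0]) (rule R'nn)
  have "(INF \<tau>\<in>{0..T'}. R' \<tau>) \<le> 0" using cINF_lower[OF bddR' gT'] R'g by simp
  moreover have "0 \<le> (INF \<tau>\<in>{0..T'}. R' \<tau>)" using gT' R'nn by (intro cINF_greatest) auto
  ultimately have INF': "(INF \<tau>\<in>{0..T'}. R' \<tau>) = 0" by simp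
  have aT': "a \<le> T'" using lpos unfolding T'_def by simp
  have "draining_feasible A B r x sphi spsi Rc T' u' s' R'"
    unfolding draining_feasible_def
  proof (intro conjI ballI)
    show "0 \<le> T'" using a lpos unfolding T'_def by simp
    show "u' integrable_on {0..T'}" using IU2[OF aT'] by blast
    show "(norm (u' t))^2 \<le> 1" if "t \<in> {0..T'}" for t
      using unorm2 that a ne unfolding u'_def by (cases "t \<le> a") auto
    show "s' t = sphi + integral {0..t} u'" if "t \<in> {0..T'}" for t
    proof (cases "t \<le> a")
      case True
      then show ?thesis using s_eq that a integral_unique[OF IU[OF True]] unfolding s'_def by auto
    next
      case False
      then have "integral {0..t} u' = integral {0..a} u + (t - a) *\<^sub>R e'" using integral_unique[OF IU2] by simp
      moreover have "s a = sphi + integral {0..a} u" using s_eq a by simp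
      ultimately show ?thesis using False unfolding s'_def L_def Q_def by simp
    qed
    show "(\<lambda>t. f_R A B r x (R' t) (s' t)) integrable_on {0..T'}" using IR2[OF aT'] by blast
    show "R' t = Rc + integral {0..t} (\<lambda>\<tau>. f_R A B r x (R' \<tau>) (s' \<tau>))" if "t \<in> {0..T'}" for t
    proof (cases "t \<le> a")
      case True
      then show ?thesis using R_eq that a integral_unique[OF IR[OF True]] unfolding R'_def by auto
    next
      case False
      then have "integral {0..t} (\<lambda>\<tau>. f_R A B r x (R' \<tau>) (s' \<tau>)) = integral {0..a} fR + integral {a..t} h"
        using integral_unique[OF IR2] by simp
      moreover have "R a = Rc + integral {0..a} fR" using R_eq a by simp
      ultimately show ?thesis using False unfolding R'_def by simp
    qed
    show "(INF \<tau>\<in>{0..T'}. R' \<tau>) = 0" by (rule INF')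
    show "s' 0 = sphi" using a s0 unfolding s'_def by simp
    show "s' T' = spsi" using LT lpos unfolding s'_def T'_def by simp
    show "R' 0 = Rc" using a R0 unfolding R'_def by simp
  qed
  then have "T \<le> T'" using opt by blast
  then show ?thesis unfolding T'_def l_def Q_def .
qed

lemma no_straight_before:
  fixes a t1 :: real
  assumes a: "0 \<le> a" "a < t1" "t1 \<le> T" and Rt1: "R t1 = 0" and Ra: "0 < R a"
    and Pn: "spsi \<noteq> s t1" and Pd: "norm (s t1 - x) = dlt"
    and c: "inner (s t1 - x) ((1 / norm (spsi - s t1)) *\<^sub>R (spsi - s t1)) \<le> 0"
    and long: "norm (spsi - s t1) + (t1 - a) \<le> norm (spsi - s a)"
  shows False
proof -
  define P where "P = s t1"
  define l0 where "l0 = norm (spsi - P)"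
  define e where "e = (1 / l0) *\<^sub>R (spsi - P)"
  have l0: "0 < l0" using Pn unfolding l0_def P_def by simp
  have ne: "norm e = 1" using l0 unfolding e_def l0_def by simp
  have spsi: "spsi - P = l0 *\<^sub>R e" using l0 unfolding e_def by simp
  have c': "inner (P - x) e \<le> 0" using c unfolding e_def l0_def P_def .
  have far: "dlt \<le> norm (s \<sigma> - x)" if \<sigma>: "a \<le> \<sigma>" "\<sigma> \<le> t1" for \<sigma>
  proof -
    define w where "w = s \<sigma> - P"
    define m where "m = t1 - \<sigma>"
    have m0: "0 \<le> m" using \<sigma> unfolding m_def by simp
    have hw: "norm w \<le> m" using s_lip[of \<sigma> t1] \<sigma> a unfolding w_def m_def P_def by (simp add: norm_minus_commute)
    have hyq: "norm (s \<sigma> - s a) \<le> \<sigma> - a" using s_lip[of a \<sigma>] \<sigma> a by simp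
    have "norm (spsi - s a) \<le> norm (spsi - s \<sigma>) + norm (s \<sigma> - s a)"
      using norm_triangle_ineq[of "spsi - s \<sigma>" "s \<sigma> - s a"] by simp
    then have hsp: "l0 + m \<le> norm (spsi - s \<sigma>)" using long hyq unfolding l0_def P_def m_def by simp
    have "spsi - s \<sigma> = - w + l0 *\<^sub>R e" using spsi unfolding w_def by (simp add: algebra_simps)
    then have "(norm (spsi - s \<sigma>))^2 = (norm w)^2 - 2 * l0 * inner w e + l0^2"
      using normsq_line[OF ne, of "- w" l0] by simp
    moreover have "(l0 + m)^2 \<le> (norm (spsi - s \<sigma>))^2" using hsp l0 m0 by (intro power_mono) auto
    moreover have "(norm w)^2 \<le> m^2" using hw by (intro power_mono) auto
    ultimately have "l0 * (2 * m) \<le> l0 * (- 2 * inner w e)" by (simp add: power2_eq_square algebra_simps)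
    then have "l0 * m \<le> l0 * (- inner w e)" by simp
    then have we: "inner w e \<le> - m" using l0 mult_le_cancel_left_pos[of l0 m "- inner w e"] by simp
    have "(norm (w + m *\<^sub>R e))^2 = (norm w)^2 + 2 * m * inner w e + m^2" by (rule normsq_line[OF ne])
    also have "\<dots> \<le> 0"
    proof -
      have "2 * m * inner w e \<le> 2 * m * (- m)" using we m0 by (intro mult_left_mono) auto
      then show ?thesis using \<open>(norm w)^2 \<le> m^2\<close> by (simp add: power2_eq_square)
    qed
    finally have "w = - m *\<^sub>R e" by (simp add: eq_neg_iff_add_eq_0)
    then have eqv: "s \<sigma> - x = (P - x) + (- m) *\<^sub>R e" unfolding w_def by (simp add: algebra_simps)
    have "(norm (s \<sigma> - x))^2 = (norm (P - x))^2 + 2 * (- m) * inner (P - x) e + (- m)^2"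
      unfolding eqv by (rule normsq_line[OF ne])
    then have "(norm (s \<sigma> - x))^2 = dlt^2 + 2 * (- m) * inner (P - x) e + m^2"
      using Pd unfolding P_def by simp
    moreover have "0 \<le> 2 * (- m) * inner (P - x) e" using m0 c' by (simp add: mult_nonneg_nonpos)
    moreover have "0 \<le> m^2" by simp
    ultimately have "dlt^2 \<le> (norm (s \<sigma> - x))^2" by linarith
    then show ?thesis by (rule power2_le_imp_le) simp
  qed
  have "0 \<le> integral {a..t1} fR"
  proof (rule integral_nonneg)
    show "fR integrable_on {a..t1}" using integrable_subinterval_real[OF fint] a by simp
    show "0 \<le> fR \<sigma>" if "\<sigma> \<in> {a..t1}" for \<sigma> using far[of \<sigma>] that by (intro f_R_nonneg) auto
  qed
  then show False using R_diff[of a t1] a Rt1 Ra by simp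
qed

lemma no_corner:
  fixes t1 :: real
  assumes opt: "\<forall>T' u' s' R'. draining_feasible A B r x sphi spsi Rc T' u' s' R' \<longrightarrow> T \<le> T'"
    and spsi_r: "norm (spsi - x) = r"
    and t1: "0 < t1" "t1 \<le> T" "R t1 = 0" "\<forall>\<tau>. 0 \<le> \<tau> \<and> \<tau> < t1 \<longrightarrow> 0 < R \<tau>"
    and Tt1: "T = t1 + norm (spsi - s t1)"
    and Pd: "norm (s t1 - x) = dlt"
  shows "0 \<le> inner (s t1 - x) ((1 / norm (spsi - s t1)) *\<^sub>R (spsi - s t1))"
proof (rule ccontr)
  define P where "P = s t1"
  define e where "e = (1 / norm (spsi - P)) *\<^sub>R (spsi - P)"
  define c where "c = inner (P - x) e"
  assume "\<not> ?thesis"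
  then have cneg: "c < 0" unfolding c_def e_def P_def by simp
  have Pn: "spsi \<noteq> P" using Pd spsi_r dlt_lt unfolding P_def by auto
  define \<epsilon>0 where "\<epsilon>0 = min t1 ((r - dlt) / 2)"
  have e0: "0 < \<epsilon>0" using t1 dlt_lt unfolding \<epsilon>0_def by simp
  define Q where "Q = (\<lambda>\<epsilon>. s (t1 - \<epsilon>))"
  define e' where "e' = (\<lambda>\<epsilon>. (1 / norm (spsi - Q \<epsilon>)) *\<^sub>R (spsi - Q \<epsilon>))"
  define c' where "c' = (\<lambda>\<epsilon>. inner (Q \<epsilon> - x) (e' \<epsilon>))"
  define E where "E = (\<lambda>\<epsilon>. R (t1 - \<epsilon>) + B / r^2 * ((- c' \<epsilon>) * ((norm (Q \<epsilon> - x))^2 - dlt^2)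
                          + (c' \<epsilon>)^2 * c' \<epsilon> + (- c' \<epsilon>)^3 / 3))"
  define M where "M = (\<lambda>\<epsilon>. max (E \<epsilon>) (max (c' \<epsilon>) (norm (Q \<epsilon> - x) - r)))"
  have img: "(\<lambda>\<epsilon>. t1 - \<epsilon>) ` {0..\<epsilon>0} \<subseteq> {0..T}" using t1 unfolding \<epsilon>0_def by auto
  have Qr: "norm (Q \<epsilon> - x) < r" if "\<epsilon> \<in> {0..\<epsilon>0}" for \<epsilon>
  proof -
    have "norm (s t1 - s (t1 - \<epsilon>)) \<le> \<epsilon>" using s_lip[of "t1 - \<epsilon>" t1] that t1 unfolding \<epsilon>0_def by auto
    moreover have "norm (Q \<epsilon> - x) \<le> norm (s t1 - x) + norm (s t1 - s (t1 - \<epsilon>))"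
      unfolding Q_def using norm_triangle_ineq[of "s t1 - x" "s (t1 - \<epsilon>) - s t1"]
      by (simp add: norm_minus_commute)
    ultimately show ?thesis using that Pd dlt_lt unfolding \<epsilon>0_def by auto
  qed
  have Qnz: "norm (spsi - Q \<epsilon>) \<noteq> 0" if "\<epsilon> \<in> {0..\<epsilon>0}" for \<epsilon>
    using Qr[OF that] spsi_r by auto
  have cQ: "continuous_on {0..\<epsilon>0} Q"
    unfolding Q_def by (rule continuous_on_compose2[OF s_cont _ img]) (intro continuous_intros)
  have cRR: "continuous_on {0..\<epsilon>0} (\<lambda>\<epsilon>. R (t1 - \<epsilon>))"
    by (rule continuous_on_compose2[OF R_cont _ img]) (intro continuous_intros)
  have cM: "continuous_on {0..\<epsilon>0} M"
    unfolding M_def E_def c'_def e'_def using Qnz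
    by (intro continuous_intros cQ cRR) auto
  have M0: "M 0 < 0"
  proof -
    have "Q 0 = P" unfolding Q_def P_def by simp
    then have c'0: "c' 0 = c" and n0: "norm (Q 0 - x) = dlt"
      unfolding c'_def e'_def c_def e_def using Pd P_def by auto
    have "(c' 0)^2 * c' 0 + (- c' 0)^3 / 3 = 2 / 3 * c^3" unfolding c'0
      by (simp add: power2_eq_square power3_eq_cube)
    moreover have "c^3 < 0" using cneg by (simp add: power3_eq_cube mult_pos_neg mult_neg_neg)
    ultimately have neg3: "(c' 0)^2 * c' 0 + (- c' 0)^3 / 3 < 0" by linarith
    have Br: "0 < B / r^2" using AB r by simp
    have "B / r^2 * ((c' 0)^2 * c' 0 + (- c' 0)^3 / 3) < 0" using mult_pos_neg[OF Br neg3] .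
    then have "E 0 < 0" unfolding E_def using n0 t1 by simp
    moreover have "c' 0 < 0" using c'0 cneg by simp
    moreover have "norm (Q 0 - x) - r < 0" using n0 dlt_lt by simp
    ultimately show ?thesis unfolding M_def by simp
  qed
  obtain d where d: "d > 0" "\<forall>\<epsilon>\<in>{0..\<epsilon>0}. dist \<epsilon> 0 < d \<longrightarrow> dist (M \<epsilon>) (M 0) < - M 0"
    using cM[unfolded continuous_on_iff] e0 M0 by (metis atLeastAtMost_iff neg_0_less_iff_less order_refl less_imp_le)
  define \<epsilon> where "\<epsilon> = min \<epsilon>0 (d / 2)"
  have eps: "0 < \<epsilon>" "\<epsilon> \<in> {0..\<epsilon>0}" using e0 d unfolding \<epsilon>_def by auto
  have "dist (M \<epsilon>) (M 0) < - M 0" using d eps unfolding \<epsilon>_def by auto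
  then have "M \<epsilon> < 0" by (simp add: dist_real_def)
  then have Eneg: "E \<epsilon> < 0" and cneg': "c' \<epsilon> < 0" and Qr': "norm (Q \<epsilon> - x) < r" unfolding M_def by auto
  define a where "a = t1 - \<epsilon>"
  have a: "0 \<le> a" "a < t1" "a \<le> T" using eps t1 unfolding a_def \<epsilon>0_def by auto
  have Ra: "0 < R a" using t1(4) a by simp
  have QaQ: "Q \<epsilon> = s a" unfolding Q_def a_def by simp
  define l where "l = norm (spsi - s a)"
  define ee where "ee = (1 / l) *\<^sub>R (spsi - s a)"
  define cc where "cc = inner (s a - x) ee"
  have ccq: "c' \<epsilon> = cc" unfolding c'_def e'_def cc_def ee_def l_def QaQ ..
  have q0r: "norm (s a - x) < r" using Qr' QaQ by simp
  have Qn: "spsi \<noteq> s a" using q0r spsi_r by auto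
  have lpos: "0 < l" using Qn unfolding l_def by simp
  have ne: "norm ee = 1" using lpos unfolding ee_def l_def by simp
  define lam where "lam = - cc"
  have lam0: "0 < lam" using cneg' ccq unfolding lam_def by simp
  have eqv: "spsi - x = (s a - x) + l *\<^sub>R ee" using lpos unfolding ee_def by simp
  have "(norm (spsi - x))^2 = (norm (s a - x))^2 + 2 * l * cc + l^2"
    unfolding eqv cc_def by (rule normsq_line[OF ne])
  then have "r^2 = (norm (s a - x))^2 + 2 * l * cc + l^2" using spsi_r by simp
  moreover have "(norm (s a - x))^2 < r^2" using q0r by (intro power_strict_mono) auto
  ultimately have "0 < l * (l + 2 * cc)" by (simp add: power2_eq_square algebra_simps)
  then have "0 < l + 2 * cc" using lpos by (simp add: zero_less_mult_iff)
  then have laml: "lam \<le> l" using lam0 unfolding lam_def by simp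
  define L where "L = (\<lambda>\<sigma>. s a + (\<sigma> - a) *\<^sub>R ee)"
  define \<phi> where "\<phi> = (\<lambda>\<sigma>. gfun A B r x (L \<sigma>))"
  have cL: "continuous_on UNIV L" unfolding L_def by (intro continuous_intros)
  have cphi: "continuous_on UNIV \<phi>" unfolding \<phi>_def by (rule g_cont[OF cL])
  have phii: "\<phi> integrable_on {p..q}" for p q
    by (rule integrable_continuous_real) (rule continuous_on_subset[OF cphi], simp)
  define k0 where "k0 = (norm (s a - x))^2 - dlt^2"
  define K where "K = B / r^2"
  define poly where "poly = (\<lambda>\<sigma>. K * (k0 + 2 * cc * (\<sigma> - a) + (\<sigma> - a)^2))"
  have phile: "\<phi> \<sigma> \<le> poly \<sigma>" for \<sigma>
  proof -
    have eqv: "L \<sigma> - x = (s a - x) + (\<sigma> - a) *\<^sub>R ee" unfolding L_def by simp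
    have nrm: "(norm (L \<sigma> - x))^2 = (norm (s a - x))^2 + 2 * (\<sigma> - a) * cc + (\<sigma> - a)^2"
      unfolding eqv cc_def by (rule normsq_line[OF ne])
    have "B / r^2 * ((norm (L \<sigma> - x))^2 - dlt^2) = poly \<sigma>"
      unfolding poly_def k0_def nrm K_def by (simp add: algebra_simps)
    then show ?thesis using g_upper[of "L \<sigma>"] unfolding \<phi>_def by linarith
  qed
  define G where "G = (\<lambda>\<sigma>. K * (k0 * (\<sigma> - a) + cc * (\<sigma> - a)^2 + (\<sigma> - a)^3 / 3))"
  have Gd: "(G has_vector_derivative poly \<sigma>) (at \<sigma> within {a..a + lam})" for \<sigma>
  proof -
    have "(G has_real_derivative poly \<sigma>) (at \<sigma> within {a..a + lam})"
      unfolding G_def poly_def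
      by (auto intro!: derivative_eq_intros simp: power2_eq_square algebra_simps) (simp add: field_simps)
    then show ?thesis by (simp add: has_real_derivative_iff_has_vector_derivative)
  qed
  have pint: "(poly has_integral (G (a + lam) - G a)) {a..a + lam}"
    using fundamental_theorem_of_calculus[of a "a + lam" G poly] Gd lam0 by simp
  have "integral {a..a + lam} \<phi> \<le> integral {a..a + lam} poly"
    by (rule integral_le[OF phii]) (use pint phile in auto)
  then have "integral {a..a + lam} \<phi> \<le> G (a + lam) - G a" using pint by (simp add: integral_unique)
  moreover have "R a + (G (a + lam) - G a) = E \<epsilon>"
    unfolding E_def G_def ccq k0_def lam_def a_def[symmetric] QaQ K_def
    by (simp add: power2_eq_square power3_eq_cube algebra_simps)
  ultimately have "R a + integral {a..a + lam} \<phi> \<le> E \<epsilon>" by linarith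
  define F where "F = (\<lambda>\<tau>. R a + integral {a..\<tau>} \<phi>)"
  have Flam: "F (a + lam) \<le> 0" using \<open>R a + integral {a..a + lam} \<phi> \<le> E \<epsilon>\<close> Eneg unfolding F_def by simp
  have cF: "continuous_on {a..a + l} F" unfolding F_def
    by (intro continuous_intros indefinite_integral_continuous_1 phii)
  have Fa: "0 < F a" using Ra unfolding F_def by simp
  obtain g where g: "a < g" "g \<le> a + l" "F g = 0" "\<forall>t. a \<le> t \<and> t < g \<longrightarrow> 0 < F t"
    using first_zero[OF cF Fa, of "a + lam"] Flam lam0 laml by auto
  have Lg: "norm (L g - x) \<le> dlt"
  proof (rule zero_inside[of a g L F \<phi>])
    show "a < g" by (rule g(1))
    show "continuous_on {a..g} L" using cL by (rule continuous_on_subset) simp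
    show "F g = 0" by (rule g(3))
    show "\<forall>t. a \<le> t \<and> t < g \<longrightarrow> 0 < F t" by (rule g(4))
    show "\<phi> integrable_on {a..g}" by (rule phii)
    show "\<forall>t\<in>{a..g}. F g = F t + integral {t..g} \<phi>"
    proof
      fix t assume "t \<in> {a..g}"
      then show "F g = F t + integral {t..g} \<phi>"
        unfolding F_def using Henstock_Kurzweil_Integration.integral_combine[where a=a and c=t and b=g and f=\<phi>] phii
        by auto
    qed
    show "\<forall>t\<in>{a..g}. dlt \<le> norm (L t - x) \<longrightarrow> 0 \<le> \<phi> t" unfolding \<phi>_def using g_nonneg by blast
  qed
  have "T \<le> a + norm (spsi - s a)"
  proof (rule competitor[OF opt a(1) a(3) Qn, of ee g])
    show "ee = (1 / norm (spsi - s a)) *\<^sub>R (spsi - s a)" unfolding ee_def l_def ..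
    show "a \<le> g" "g \<le> a + norm (spsi - s a)" using g unfolding l_def by auto
    show "R a + integral {a..g} (\<lambda>\<sigma>. gfun A B r x (s a + (\<sigma> - a) *\<^sub>R ee)) = 0"
      using g(3) unfolding F_def \<phi>_def L_def .
    show "\<forall>\<tau>. a \<le> \<tau> \<and> \<tau> < g \<longrightarrow> 0 < R a + integral {a..\<tau>} (\<lambda>\<sigma>. gfun A B r x (s a + (\<sigma> - a) *\<^sub>R ee))"
      using g(4) unfolding F_def \<phi>_def L_def .
    show "norm (s a + (g - a) *\<^sub>R ee - x) \<le> dlt" using Lg unfolding L_def .
  qed
  then have long: "norm (spsi - s t1) + (t1 - a) \<le> norm (spsi - s a)" using Tt1 by simp
  show False
  proof (rule no_straight_before[OF a(1) a(2) t1(2) t1(3) Ra _ Pd _ long])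
    show "spsi \<noteq> s t1" using Pn unfolding P_def .
    show "inner (s t1 - x) ((1 / norm (spsi - s t1)) *\<^sub>R (spsi - s t1)) \<le> 0"
      using cneg unfolding c_def e_def P_def by simp
  qed
qed

lemma main_result:
  assumes opt: "\<forall>T' u' s' R'. draining_feasible A B r x sphi spsi Rc T' u' s' R' \<longrightarrow> T \<le> T'"
    and spsi_r: "norm (spsi - x) = r" and Rcpos: "0 < Rc"
  shows "(\<exists>!t0. t0 \<in> {0..T} \<and> norm (s t0 - x) = dlt \<and> R t0 = 0)
    \<and> (\<forall>t0. t0 \<in> {0..T} \<and> norm (s t0 - x) = dlt \<and> R t0 = 0 \<longrightarrow>
           (AE t in lebesgue. t \<in> {t0..T} \<longrightarrow>
              u t = (1 / norm (spsi - s t0)) *\<^sub>R (spsi - s t0)))"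
proof -
  obtain \<tau>0 where \<tau>0: "\<tau>0 \<in> {0..T}" "R \<tau>0 = 0" using R_zero by blast
  have R0pos: "0 < R 0" using R0 Rcpos by simp
  obtain t1 where t1: "0 < t1" "t1 \<le> T" "R t1 = 0" "\<forall>t. 0 \<le> t \<and> t < t1 \<longrightarrow> 0 < R t"
    using first_zero[OF R_cont R0pos \<tau>0(1)] \<tau>0(2) by auto
  have P1: "norm (s t1 - x) \<le> dlt"
  proof (rule zero_inside[of 0 t1 s R fR])
    show "0 < t1" by (rule t1(1))
    show "continuous_on {0..t1} s" using s_cont by (rule continuous_on_subset) (use t1 in auto)
    show "R t1 = 0" by (rule t1(3))
    show "\<forall>t. 0 \<le> t \<and> t < t1 \<longrightarrow> 0 < R t" by (rule t1(4))
    show "\<forall>t\<in>{0..t1}. R t1 = R t + integral {t..t1} fR" using R_diff t1 by force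
    show "fR integrable_on {0..t1}" using integrable_subinterval_real[OF fint] t1 by simp
    show "\<forall>t\<in>{0..t1}. dlt \<le> norm (s t - x) \<longrightarrow> 0 \<le> fR t" using f_R_nonneg by blast
  qed
  define P where "P = s t1"
  define l0 where "l0 = norm (spsi - P)"
  define e where "e = (1 / l0) *\<^sub>R (spsi - P)"
  have Pn: "spsi \<noteq> P" using P1 spsi_r dlt_lt unfolding P_def by auto
  have l0pos: "0 < l0" using Pn unfolding l0_def by simp
  have ne: "norm e = 1" using l0pos unfolding e_def l0_def by simp
  have spsiP: "spsi - P = l0 *\<^sub>R e" using l0pos unfolding e_def by simp
  have "T \<le> t1 + norm (spsi - s t1)"
  proof (rule competitor[OF opt _ t1(2), of e t1])
    show "0 \<le> t1" using t1 by simp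
    show "spsi \<noteq> s t1" using Pn unfolding P_def .
    show "e = (1 / norm (spsi - s t1)) *\<^sub>R (spsi - s t1)" unfolding e_def l0_def P_def ..
    show "t1 \<le> t1" "t1 \<le> t1 + norm (spsi - s t1)" by auto
    show "R t1 + integral {t1..t1} (\<lambda>\<sigma>. gfun A B r x (s t1 + (\<sigma> - t1) *\<^sub>R e)) = 0" using t1 by simp
    show "\<forall>\<tau>. t1 \<le> \<tau> \<and> \<tau> < t1 \<longrightarrow> 0 < R t1 + integral {t1..\<tau>} (\<lambda>\<sigma>. gfun A B r x (s t1 + (\<sigma> - t1) *\<^sub>R e))"
      by auto
    show "norm (s t1 + (t1 - t1) *\<^sub>R e - x) \<le> dlt" using P1 by simp
  qed
  moreover have "norm (spsi - s t1) \<le> T - t1" using s_lip[of t1 T] t1 sT by simp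
  ultimately have Tt1: "T = t1 + l0" unfolding l0_def P_def by simp
  have iu: "integral {t1..T} u = (T - t1) *\<^sub>R e"
    using s_diff[of t1 T] t1 sT spsiP Tt1 unfolding P_def by simp
  have AEu: "AE t in lebesgue. t \<in> {t1..T} \<longrightarrow> u t = e"
  proof (rule straight_AE[OF _ _ _ ne iu])
    show "t1 \<le> T" by (rule t1(2))
    show "u integrable_on {t1..T}" using integrable_subinterval_real[OF uint] t1 by simp
    show "\<forall>t\<in>{t1..T}. norm (u t) \<le> 1" using unorm t1 by simp
  qed
  obtain N where N: "{t \<in> space lebesgue. \<not> (t \<in> {t1..T} \<longrightarrow> u t = e)} \<subseteq> N"
      "emeasure lebesgue N = 0" "N \<in> sets lebesgue"
    using AE_E[OF AEu] by blast
  have negN: "negligible N" using N(2,3) by (simp add: negligible_iff_emeasure0)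
  have sline: "s t = P + (t - t1) *\<^sub>R e" if "t \<in> {t1..T}" for t
  proof -
    have "integral {t1..t} u = integral {t1..t} (\<lambda>_. e)"
    proof (rule integral_spike[OF negN])
      fix y assume "y \<in> {t1..t} - N"
      then show "e = u y" using N(1) that by auto
    qed
    also have "\<dots> = (t - t1) *\<^sub>R e" using that by simp
    finally show ?thesis using s_diff[of t1 t] that t1 unfolding P_def by (simp add: algebra_simps)
  qed
  have nc: "0 \<le> inner (P - x) e" if "norm (P - x) = dlt"
    using no_corner[OF opt spsi_r t1 _ that[unfolded P_def]] Tt1 unfolding e_def l0_def P_def by simp
  have ge_t1: "t1 \<le> t0" if "t0 \<in> {0..T}" "R t0 = 0" for t0
    using t1(4) that by force
  define c where "c = inner (P - x) e"
  have quad: "(norm (s t - x))^2 = (norm (P - x))^2 + 2 * (t - t1) * c + (t - t1)^2" if "t \<in> {t1..T}" for t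
  proof -
    have "s t - x = (P - x) + (t - t1) *\<^sub>R e" using sline[OF that] by simp
    then show ?thesis unfolding c_def using normsq_line[OF ne] by metis
  qed
  have cn: "continuous_on {t1..T} (\<lambda>t. norm (s t - x))"
    using s_cont by (intro continuous_intros) (rule continuous_on_subset, use t1 in auto)
  obtain t0 where t0: "t1 \<le> t0" "t0 \<le> T" "norm (s t0 - x) = dlt"
    using IVT'[of "\<lambda>t. norm (s t - x)" t1 dlt T] P1 sT spsi_r dlt_lt t1(2) cn unfolding P_def by auto
  have Rt0: "R t0 = 0"
  proof -
    have "integral {t1..t0} fR \<le> integral {t1..t0} (\<lambda>_. 0::real)"
    proof (rule integral_le)
      show "fR integrable_on {t1..t0}" using integrable_subinterval_real[OF fint] t1 t0 by simp
      show "(\<lambda>_. 0::real) integrable_on {t1..t0}" by (rule integrable_0)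
      show "fR \<sigma> \<le> 0" if "\<sigma> \<in> {t1..t0}" for \<sigma>
      proof (rule f_R_nonpos)
        have "norm (P + (\<sigma> - t1) *\<^sub>R e - x) \<le> dlt"
          by (rule line_conv[of t1 \<sigma> t0]) (use that P1 t0 sline[of t0] in \<open>auto simp: P_def\<close>)
        then show "norm (s \<sigma> - x) \<le> dlt" using sline[of \<sigma>] that t0 by simp
      qed
    qed
    then have "R t0 \<le> R t1" using R_diff[of t1 t0] t1 t0 by simp
    then show ?thesis using R_nonneg[of t0] t1 t0 by simp
  qed
  have uniq: "t0' = t0''" if a1: "t0' \<in> {0..T}" "norm (s t0' - x) = dlt" "R t0' = 0"
    and a2: "t0'' \<in> {0..T}" "norm (s t0'' - x) = dlt" "R t0'' = 0" for t0' t0''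
  proof (rule ccontr)
    assume neq: "t0' \<noteq> t0''"
    define \<tau> where "\<tau> = t0' - t1"
    define \<tau>' where "\<tau>' = t0'' - t1"
    have tp: "0 \<le> \<tau>" "0 \<le> \<tau>'" using ge_t1[of t0'] ge_t1[of t0''] a1 a2 unfolding \<tau>_def \<tau>'_def by auto
    define D where "D = dlt^2 - (norm (P - x))^2"
    have D0: "0 \<le> D" using P1 unfolding D_def P_def by (simp add: power_mono)
    have h1: "\<tau>^2 + 2 * \<tau> * c = D" using quad[of t0'] a1 ge_t1[of t0'] unfolding D_def \<tau>_def by simp
    have h2: "\<tau>'^2 + 2 * \<tau>' * c = D" using quad[of t0''] a2 ge_t1[of t0''] unfolding D_def \<tau>'_def by simp
    have "(\<tau> - \<tau>') * (\<tau> + \<tau>' + 2 * c) = (\<tau>^2 + 2 * \<tau> * c) - (\<tau>'^2 + 2 * \<tau>' * c)"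
      by (simp add: algebra_simps power2_eq_square)
    then have "(\<tau> - \<tau>') * (\<tau> + \<tau>' + 2 * c) = 0" using h1 h2 by simp
    moreover have "\<tau> \<noteq> \<tau>'" using neq unfolding \<tau>_def \<tau>'_def by simp
    ultimately have s2: "\<tau>' = - 2 * c - \<tau>" by simp
    have "\<tau> * \<tau>' = - (\<tau>^2 + 2 * \<tau> * c)" unfolding s2 by (simp add: algebra_simps power2_eq_square)
    then have pr: "\<tau> * \<tau>' = - D" using h1 by simp
    have "0 \<le> \<tau> * \<tau>'" using tp by simp
    then have "D = 0" using pr D0 by simp
    then have "(norm (P - x))^2 = dlt^2" unfolding D_def by simp
    then have "norm (P - x) = dlt" using dlt_pos by (simp add: power2_eq_iff_nonneg)
    then have "0 \<le> c" using nc unfolding c_def by simp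
    then show False using s2 tp \<open>\<tau> \<noteq> \<tau>'\<close> by simp
  qed
  have ex1: "\<exists>!t0. t0 \<in> {0..T} \<and> norm (s t0 - x) = dlt \<and> R t0 = 0"
  proof (rule ex1I[of _ t0])
    show "t0 \<in> {0..T} \<and> norm (s t0 - x) = dlt \<and> R t0 = 0" using t0 t1 Rt0 by simp
    show "y = t0" if "y \<in> {0..T} \<and> norm (s y - x) = dlt \<and> R y = 0" for y
      using uniq[of y t0] that t0 t1 Rt0 by simp
  qed
  have dir: "AE t in lebesgue. t \<in> {t0'..T} \<longrightarrow> u t = (1 / norm (spsi - s t0')) *\<^sub>R (spsi - s t0')"
    if h: "t0' \<in> {0..T}" "norm (s t0' - x) = dlt" "R t0' = 0" for t0'
  proof -
    have g1: "t1 \<le> t0'" using ge_t1 h by simp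
    have "t0' \<noteq> T" using h sT spsi_r dlt_lt by auto
    then have lt: "t0' < T" using h by simp
    have "spsi - s t0' = (T - t0') *\<^sub>R e"
      using sline[of t0'] g1 lt spsiP Tt1 by (simp add: algebra_simps)
    then have ee: "(1 / norm (spsi - s t0')) *\<^sub>R (spsi - s t0') = e" using lt ne by simp
    show ?thesis unfolding ee using AEu
      by (rule AE_mp) (intro AE_I2 impI, use g1 in auto)
  qed
  show ?thesis using ex1 dir by blast
qed



end



end
theorem theorem1:
  fixes x sphi spsi :: "real^2" and r A B Rc T :: real
    and u s :: "real \<Rightarrow> real^2" and R :: "real \<Rightarrow> real"
  assumes "0 < r" and "0 < A" and "A < B"
    and "norm (sphi - x) = r" and "norm (spsi - x) = r"
    and "0 < Rc"
    and "draining_optimal A B r x sphi spsi Rc T u s R"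
  shows "(\<exists>!t0. t0 \<in> {0..T} \<and> norm (s t0 - x) = sqrt (r^2 * (B - A) / B) \<and> R t0 = 0)
    \<and> (\<forall>t0. t0 \<in> {0..T} \<and> norm (s t0 - x) = sqrt (r^2 * (B - A) / B) \<and> R t0 = 0 \<longrightarrow>
           (AE t in lebesgue. t \<in> {t0..T} \<longrightarrow>
              u t = (1 / norm (spsi - s t0)) *\<^sub>R (spsi - s t0)))"
proof -
  have feas: "draining_feasible A B r x sphi spsi Rc T u s R"
    and opt: "\<forall>T' u' s' R'. draining_feasible A B r x sphi spsi Rc T' u' s' R' \<longrightarrow> T \<le> T'"
    using assms(7) unfolding draining_optimal_def by blast+
  have dd: "dlt A B r = sqrt (r^2 * (B - A) / B)" using assms(1,2,3) by (simp add: dlt_def)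
  show ?thesis
    using main_result[OF assms(1) assms(2) assms(3) feas opt assms(5) assms(6)] unfolding dd .
qed

end
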